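(* Let $\mathfrak g=\mathfrak r_3$ (basis $\{e_1,e_2,e_3\}$, nonzero brackets $[e_1,e_2]=e_2+e_3$, $[e_1,e_3]=e_3$). Then the action of $\mathbb R^\times\mathrm{Aut}(\mathfrak g)$ on $\mathcal M(\mathfrak g)=\mathrm{GL}_3(\mathbb R)/\mathrm{O}(3)$ (with the natural Riemannian metric) is of cohomogeneity one, and all orbits are isometrically congruent to each other.
   Context: Identify $\mathfrak g\cong\mathbb R^3$ via the basis. $\mathcal M(\mathfrak g)$ is the set of inner products on $\mathfrak g$, with transitive $\mathrm{GL}_3(\mathbb R)$-action $g.\langle\cdot,\cdot\rangle=\langle g^{-1}\cdot,g^{-1}\cdot\rangle$, so $\mathcal M(\mathfrak g)=\mathrm{GL}_3(\mathbb R)/\mathrm{O}(3)$. The natural Riemannian metric is the $\mathrm{GL}_3(\mathbb R)$-invariant metric corresponding to $\langle X,Y\rangle=\mathrm{tr}(XY)$ on $\mathrm{sym}(3)$ (reductive complement $\mathfrak{gl}_3=\mathfrak o(3)\oplus\mathrm{sym}(3)$). $\mathbb R^\times\mathrm{Aut}(\mathfrak g)=\{c\varphi:c\ne0,\ \varphi\in\mathrm{Aut}(\mathfrak g)\}\subset\mathrm{GL}_3(\mathbb R)$ acts isometrically by restriction. An isometric action is of cohomogeneity one if its orbits of maximal dimension have codimension one. Two orbits are isometrically congruent if some isometry of the ambient space maps one onto the other. *)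

theory Defs
  imports "HOL-Analysis.Analysis"
begin

type_synonym mat3 = "real^3^3"

text \<open>The Lie algebra r_3 on R^3 with standard basis e1 = (1,0,0), e2 = (0,1,0), e3 = (0,0,1):
  nonzero brackets [e1,e2] = e2 + e3, [e1,e3] = e3 (extended bilinearly and antisymmetrically).\<close>
definition r3_bracket :: "real^3 \<Rightarrow> real^3 \<Rightarrow> real^3" where
  "r3_bracket x y =
     vector [0,
             x$1 * y$2 - x$2 * y$1,
             (x$1 * y$2 - x$2 * y$1) + (x$1 * y$3 - x$3 * y$1)]"

definition is_aut :: "mat3 \<Rightarrow> bool" where
  "is_aut \<phi> \<longleftrightarrow> invertible \<phi> \<and>
     (\<forall>x y. \<phi> *v r3_bracket x y = r3_bracket (\<phi> *v x) (\<phi> *v y))"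

definition RAut :: "mat3 set" where
  "RAut = {c *\<^sub>R \<phi> | c \<phi>. c \<noteq> 0 \<and> is_aut \<phi>}"

text \<open>M(g): inner products on g = R^3, represented by their Gram matrices w.r.t. the basis.\<close>
definition Mg :: "mat3 set" where
  "Mg = {P. transpose P = P \<and> (\<forall>x. x \<noteq> 0 \<longrightarrow> x \<bullet> (P *v x) > 0)}"

text \<open>The action g.<.,.> = <g^{-1}.,g^{-1}.>, on Gram matrices: P \<mapsto> g^{-T} P g^{-1}.\<close>
definition act :: "mat3 \<Rightarrow> mat3 \<Rightarrow> mat3" where
  "act g P = transpose (matrix_inv g) ** P ** matrix_inv g"

text \<open>The natural GL_3-invariant Riemannian metric: at the base point I (standard inner
  product), the tangent vector induced by X in sym(3) is d/dt (exp(tX).I) = -2X, and its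
  squared length is tr(X X).\<close>
definition riem_metric :: "mat3 \<Rightarrow> mat3 \<Rightarrow> mat3 \<Rightarrow> real" where
  "riem_metric P A B = (1/4) * trace (matrix_inv P ** A ** matrix_inv P ** B)"

definition adm_curve :: "(real \<Rightarrow> mat3) \<Rightarrow> (real \<Rightarrow> mat3) \<Rightarrow> bool" where
  "adm_curve c c' \<longleftrightarrow> (\<forall>t\<in>{0..1}. c t \<in> Mg \<and> (c has_vector_derivative c' t) (at t within {0..1}))
                     \<and> continuous_on {0..1} c'"

definition riem_length :: "(real \<Rightarrow> mat3) \<Rightarrow> (real \<Rightarrow> mat3) \<Rightarrow> real" where
  "riem_length c c' = integral {0..1} (\<lambda>t. sqrt (riem_metric (c t) (c' t) (c' t)))"

definition riem_dist :: "mat3 \<Rightarrow> mat3 \<Rightarrow> real" where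
  "riem_dist P Q = Inf {riem_length c c' | c c'. adm_curve c c' \<and> c 0 = P \<and> c 1 = Q}"

text \<open>Isometries of M(g) (distance-preserving bijections; Myers--Steenrod).\<close>
definition isometry_Mg :: "(mat3 \<Rightarrow> mat3) \<Rightarrow> bool" where
  "isometry_Mg f \<longleftrightarrow> bij_betw f Mg Mg \<and> (\<forall>P\<in>Mg. \<forall>Q\<in>Mg. riem_dist (f P) (f Q) = riem_dist P Q)"

definition orbit :: "mat3 \<Rightarrow> mat3 set" where
  "orbit P = (\<lambda>g. act g P) ` RAut"

definition orbit_tangent :: "mat3 \<Rightarrow> mat3 set" where
  "orbit_tangent P = {v. \<exists>\<gamma>. (\<forall>t. \<gamma> t \<in> RAut) \<and> \<gamma> 0 = mat 1 \<and> \<gamma> differentiable (at 0)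
                         \<and> ((\<lambda>t. act (\<gamma> t) P) has_vector_derivative v) (at 0)}"

definition orbit_dim :: "mat3 \<Rightarrow> nat" where
  "orbit_dim P = dim (orbit_tangent P)"

text \<open>dim M(g): M(g) is an open subset of sym(3).\<close>
definition dim_Mg :: nat where
  "dim_Mg = dim {A :: mat3. transpose A = A}"

definition cohomogeneity_one :: bool where
  "cohomogeneity_one \<longleftrightarrow> Max (orbit_dim ` Mg) + 1 = dim_Mg"

end

theory Submission
  imports Defs
begin


lemma m3_eq: "(A::mat3) = B \<longleftrightarrow> (\<forall>i j. A$i$j = B$i$j)" by (simp add: vec_eq_iff)
lemma m3_eq3: "(A::mat3) = B \<longleftrightarrow> (\<forall>i\<in>{1,2,3}. \<forall>j\<in>{1,2,3}. A$i$j = B$i$j)"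
  by (simp add: vec_eq_iff forall_3)
lemma mm3: "((A::mat3) ** B)$i$j = A$i$1*B$1$j + A$i$2*B$2$j + A$i$3*B$3$j"
  by (simp add: matrix_matrix_mult_def sum_3)

lemma inv_props: assumes "invertible (A::mat3)"
  shows "A ** matrix_inv A = mat 1" "matrix_inv A ** A = mat 1"
proof -
  have "\<exists>A'. A ** A' = mat 1 \<and> A' ** A = mat 1" using assms by (simp add: invertible_def)
  from someI_ex[OF this] show "A ** matrix_inv A = mat 1" "matrix_inv A ** A = mat 1"
    by (simp_all add: matrix_inv_def)
qed

lemma inv_unique: assumes "(A::mat3) ** B = mat 1" "B ** A = mat 1"
  shows "matrix_inv A = B"
proof -
  have i: "invertible A" using assms by (auto simp: invertible_def)
  have "matrix_inv A = matrix_inv A ** (A ** B)" using assms by simp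
  also have "\<dots> = (matrix_inv A ** A) ** B" by (simp add: matrix_mul_assoc)
  also have "\<dots> = B" using inv_props[OF i] by simp
  finally show ?thesis .
qed

lemma inv_invertible: "invertible (A::mat3) \<Longrightarrow> invertible (matrix_inv A)"
  using inv_props by (auto simp: invertible_def)

lemma inv_inv: "invertible (A::mat3) \<Longrightarrow> matrix_inv (matrix_inv A) = A"
  using inv_props by (intro inv_unique) auto

lemma inv_mult: assumes a: "invertible (A::mat3)" "invertible (B::mat3)"
  shows "matrix_inv (A ** B) = matrix_inv B ** matrix_inv A"
proof (rule inv_unique)
  have "A ** B ** (matrix_inv B ** matrix_inv A) = A ** (B ** matrix_inv B) ** matrix_inv A"
    by (simp add: matrix_mul_assoc)
  then show "A ** B ** (matrix_inv B ** matrix_inv A) = mat 1" using inv_props a by simp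
  have "matrix_inv B ** matrix_inv A ** (A ** B) = matrix_inv B ** (matrix_inv A ** A) ** B"
    by (simp add: matrix_mul_assoc)
  then show "matrix_inv B ** matrix_inv A ** (A ** B) = mat 1" using inv_props a by simp
qed

lemma inv_id: "matrix_inv (mat 1 :: mat3) = mat 1"
  by (rule inv_unique) simp_all

lemma invertible_mult3: "invertible (A::mat3) \<Longrightarrow> invertible B \<Longrightarrow> invertible (A ** B)"
  by (simp add: invertible_mult)

lemma act_comp: assumes "invertible (g::mat3)" "invertible h"
  shows "act g (act h P) = act (g ** h) P"
  using assms by (simp add: act_def inv_mult matrix_transpose_mul matrix_mul_assoc)

lemma act_id: "act (mat 1) P = P" by (simp add: act_def inv_id)

lemma act_inv: "invertible g \<Longrightarrow> act (matrix_inv g) (act g P) = P"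
  by (simp add: act_comp inv_invertible inv_props act_id)

lemma mat_radd: "((A::mat3) + B) ** C = A ** C + B ** C"
  by (simp add: vec_eq_iff matrix_matrix_mult_def sum.distrib distrib_right)
lemma act_add: "act g (A + B) = act g A + act g B"
  by (simp add: act_def matrix_add_ldistrib mat_radd)
lemma act_scale: "act g (c *\<^sub>R A) = c *\<^sub>R act g A"
  by (simp add: act_def vec_eq_iff matrix_matrix_mult_def sum_distrib_left mult_ac)
lemma act_linear: "bounded_linear (act (g::mat3))"
proof -
  have "linear (act g)" by (rule linearI) (simp_all add: act_add act_scale)
  then show ?thesis by (simp add: linear_conv_bounded_linear)
qed

lemma Mg_invertible: assumes "P \<in> Mg" shows "invertible P"
proof -
  have "\<forall>x. P *v x = 0 \<longrightarrow> x = 0"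
  proof (intro allI impI)
    fix x assume "P *v x = 0"
    then have "x \<bullet> (P *v x) = 0" by simp
    then show "x = 0" using assms unfolding Mg_def by force
  qed
  then obtain B where "B ** P = mat 1" using matrix_left_invertible_ker by blast
  then show ?thesis using matrix_left_right_inverse invertible_def by blast
qed

lemma inner_mv: "(x::real^3) \<bullet> (transpose A *v y) = (A *v x) \<bullet> y"
  by (metis dot_lmul_matrix inner_commute transpose_matrix_vector)

lemma inner_vm: "(x::real^3) \<bullet> (y v* A) = (A *v x) \<bullet> y"
  by (metis inner_mv transpose_matrix_vector)
lemma act_Mg: assumes "invertible g" "P \<in> Mg" shows "act g P \<in> Mg"
proof -
  let ?G = "matrix_inv g"
  have ig: "invertible ?G" using assms inv_invertible by blast
  have s: "transpose P = P" using assms unfolding Mg_def by auto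
  have "transpose (act g P) = act g P"
    by (simp add: act_def matrix_transpose_mul s matrix_mul_assoc)
  moreover have "x \<bullet> (act g P *v x) > 0" if "x \<noteq> 0" for x
  proof -
    have "?G *v x \<noteq> 0" using ig inj_matrix_vector_mult[OF ig] that
      by (metis matrix_vector_mult_0_right injD)
    then have "(?G *v x) \<bullet> (P *v (?G *v x)) > 0" using assms unfolding Mg_def by auto
    moreover have "x \<bullet> (act g P *v x) = (?G *v x) \<bullet> (P *v (?G *v x))"
      by (simp add: act_def matrix_vector_mul_assoc[symmetric] inner_mv inner_vm)
    ultimately show ?thesis by simp
  qed
  ultimately show ?thesis unfolding Mg_def by auto
qed



lemma inv_act: assumes g: "invertible (g::mat3)" and P: "invertible P"
  shows "matrix_inv (act g P) = g ** matrix_inv P ** transpose g"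
proof (rule inv_unique)
  let ?G = "matrix_inv g" and ?Q = "matrix_inv P"
  have tg: "transpose g ** transpose ?G = mat 1"
    by (metis g inv_props(2) matrix_transpose_mul transpose_mat)
  have tg2: "transpose ?G ** transpose g = mat 1"
    by (metis g inv_props(1) matrix_transpose_mul transpose_mat)
  have "act g P ** (g ** ?Q ** transpose g) = transpose ?G ** P ** (?G ** g) ** ?Q ** transpose g"
    by (simp add: act_def matrix_mul_assoc)
  also have "\<dots> = transpose ?G ** transpose g"
    using inv_props[OF g] inv_props[OF P] by (simp add: matrix_mul_assoc[symmetric])
  finally show "act g P ** (g ** ?Q ** transpose g) = mat 1" using tg2 by simp
  have "(g ** ?Q ** transpose g) ** act g P = g ** ?Q ** (transpose g ** transpose ?G) ** P ** ?G"
    by (simp add: act_def matrix_mul_assoc)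
  also have "\<dots> = g ** ?G"
    using tg inv_props[OF P] by (simp add: matrix_mul_assoc[symmetric])
  finally show "(g ** ?Q ** transpose g) ** act g P = mat 1" using inv_props[OF g] by simp
qed

lemma metric_act: assumes g: "invertible (g::mat3)" and P: "invertible P"
  shows "riem_metric (act g P) (act g A) (act g B) = riem_metric P A B"
proof -
  let ?G = "matrix_inv g" and ?Q = "matrix_inv P"
  have tg: "transpose g ** transpose ?G = mat 1"
    by (metis g inv_props(2) matrix_transpose_mul transpose_mat)
  have "matrix_inv (act g P) ** act g A ** matrix_inv (act g P) ** act g B
      = g ** ?Q ** (transpose g ** transpose ?G) ** A ** (?G ** g) ** ?Q ** (transpose g ** transpose ?G) ** B ** ?G"
    unfolding inv_act[OF g P] by (simp add: act_def matrix_mul_assoc)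
  also have "\<dots> = g ** (?Q ** A ** ?Q ** B ** ?G)"
    using tg inv_props[OF g] by (simp add: matrix_mul_assoc)
  finally have e: "matrix_inv (act g P) ** act g A ** matrix_inv (act g P) ** act g B = g ** (?Q ** A ** ?Q ** B ** ?G)" .
  have "trace (g ** (?Q ** A ** ?Q ** B ** ?G)) = trace ((?Q ** A ** ?Q ** B ** ?G) ** g)"
    by (rule trace_mul_sym)
  also have "\<dots> = trace (?Q ** A ** ?Q ** B)"
    using inv_props[OF g] by (simp add: matrix_mul_assoc[symmetric])
  finally show ?thesis unfolding riem_metric_def e by simp
qed

definition lens :: "mat3 \<Rightarrow> mat3 \<Rightarrow> real set" where
  "lens P Q = {riem_length c c' | c c'. adm_curve c c' \<and> c 0 = P \<and> c 1 = Q}"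

lemma lens_sub: assumes g: "invertible (g::mat3)"
  shows "lens P Q \<subseteq> lens (act g P) (act g Q)"
proof
  fix l assume "l \<in> lens P Q"
  then obtain c c' where cc: "adm_curve c c'" "c 0 = P" "c 1 = Q" "l = riem_length c c'"
    unfolding lens_def by auto
  let ?d = "\<lambda>t. act g (c t)" and ?d' = "\<lambda>t. act g (c' t)"
  have "adm_curve ?d ?d'"
    unfolding adm_curve_def
  proof (intro conjI ballI)
    fix t :: real assume t: "t \<in> {0..1}"
    show "?d t \<in> Mg" using cc(1) t act_Mg[OF g] unfolding adm_curve_def by auto
    show "(?d has_vector_derivative ?d' t) (at t within {0..1})"
      using cc(1) t bounded_linear.has_vector_derivative[OF act_linear] unfolding adm_curve_def by auto
  next
    show "continuous_on {0..1} ?d'"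
      using cc(1) unfolding adm_curve_def
      by (intro continuous_on_compose2[OF linear_continuous_on[OF act_linear], of _ c' UNIV]) auto
  qed
  moreover have "riem_length ?d ?d' = l"
    unfolding cc(4) riem_length_def
  proof (rule integral_cong)
    fix t :: real assume t: "t \<in> {0..1}"
    then have "c t \<in> Mg" using cc(1) unfolding adm_curve_def by auto
    then show "sqrt (riem_metric (?d t) (?d' t) (?d' t)) = sqrt (riem_metric (c t) (c' t) (c' t))"
      using metric_act[OF g Mg_invertible] by simp
  qed
  ultimately show "l \<in> lens (act g P) (act g Q)" unfolding lens_def using cc
    by (intro CollectI exI[of _ ?d] exI[of _ ?d']) auto
qed

lemma lens_eq: assumes g: "invertible (g::mat3)"
  shows "lens (act g P) (act g Q) = lens P Q"
proof
  show "lens P Q \<subseteq> lens (act g P) (act g Q)" by (rule lens_sub[OF g])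
  have "lens (act g P) (act g Q) \<subseteq> lens (act (matrix_inv g) (act g P)) (act (matrix_inv g) (act g Q))"
    by (rule lens_sub[OF inv_invertible[OF g]])
  then show "lens (act g P) (act g Q) \<subseteq> lens P Q" using act_inv[OF g] by simp
qed

lemma isometry_act: assumes g: "invertible (g::mat3)" shows "isometry_Mg (act g)"
  unfolding isometry_Mg_def
proof (intro conjI ballI)
  show "bij_betw (act g) Mg Mg"
  proof (rule bij_betwI[where g = "act (matrix_inv g)"])
    show "act g \<in> Mg \<rightarrow> Mg" using act_Mg[OF g] by auto
    show "act (matrix_inv g) \<in> Mg \<rightarrow> Mg" using act_Mg[OF inv_invertible[OF g]] by auto
    fix x show "act (matrix_inv g) (act g x) = x" by (rule act_inv[OF g])
    show "act g (act (matrix_inv g) x) = x"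
      using act_inv[OF inv_invertible[OF g]] inv_inv[OF g] by metis
  qed
  fix P Q assume "P \<in> Mg" "Q \<in> Mg"
  show "riem_dist (act g P) (act g Q) = riem_dist P Q"
    using lens_eq[OF g, of P Q] unfolding riem_dist_def lens_def by simp
qed



lemma mv3: "((A::mat3) *v x)$i = A$i$1*x$1 + A$i$2*x$2 + A$i$3*x$3"
  by (simp add: matrix_vector_mult_def sum_3)

lemma det3: "det (A::mat3) = A$1$1 * A$2$2 * A$3$3 + A$1$2 * A$2$3 * A$3$1 + A$1$3 * A$2$1 * A$3$2
   - A$1$1 * A$2$3 * A$3$2 - A$1$2 * A$2$1 * A$3$3 - A$1$3 * A$2$2 * A$3$1"
  by (simp add: det_3)

lemma is_aut_char: "is_aut \<phi> \<longleftrightarrow> \<phi>$1$2 = 0 \<and> \<phi>$1$3 = 0 \<and> \<phi>$2$3 = 0 \<and> \<phi>$1$1 = 1 \<and> \<phi>$2$2 = \<phi>$3$3 \<and> \<phi>$2$2 \<noteq> 0"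
proof
  assume a: "is_aut \<phi>"
  have d: "det \<phi> \<noteq> 0" using a invertible_det_nz unfolding is_aut_def by auto
  have br: "\<And>x y. \<phi> *v r3_bracket x y = r3_bracket (\<phi> *v x) (\<phi> *v y)" using a unfolding is_aut_def by auto
  let ?e1 = "vector [1,0,0] :: real^3" and ?e2 = "vector [0,1,0] :: real^3" and ?e3 = "vector [0,0,1] :: real^3"
  have b1: "\<phi> *v r3_bracket ?e1 ?e2 = r3_bracket (\<phi> *v ?e1) (\<phi> *v ?e2)" by (rule br)
  have b2: "\<phi> *v r3_bracket ?e1 ?e3 = r3_bracket (\<phi> *v ?e1) (\<phi> *v ?e3)" by (rule br)
  have b3: "\<phi> *v r3_bracket ?e2 ?e3 = r3_bracket (\<phi> *v ?e2) (\<phi> *v ?e3)" by (rule br)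
  have h11: "(\<phi> *v r3_bracket ?e1 ?e2)$1 = (r3_bracket (\<phi> *v ?e1) (\<phi> *v ?e2))$1" using b1 by simp
  have h13: "(\<phi> *v r3_bracket ?e1 ?e2)$3 = (r3_bracket (\<phi> *v ?e1) (\<phi> *v ?e2))$3" using b1 by simp
  have h21: "(\<phi> *v r3_bracket ?e1 ?e3)$1 = (r3_bracket (\<phi> *v ?e1) (\<phi> *v ?e3))$1" using b2 by simp
  have h22: "(\<phi> *v r3_bracket ?e1 ?e3)$2 = (r3_bracket (\<phi> *v ?e1) (\<phi> *v ?e3))$2" using b2 by simp
  have h23: "(\<phi> *v r3_bracket ?e1 ?e3)$3 = (r3_bracket (\<phi> *v ?e1) (\<phi> *v ?e3))$3" using b2 by simp
  have z13: "\<phi>$1$3 = 0" using h21 by (simp add: mv3 r3_bracket_def)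
  have z12: "\<phi>$1$2 = 0" using h11 z13 by (simp add: mv3 r3_bracket_def)
  note z = z12 z13
  have c22: "\<phi>$2$3 * (1 - \<phi>$1$1) = 0" using h22 z by (simp add: mv3 r3_bracket_def algebra_simps)
  have c23: "\<phi>$3$3 * (1 - \<phi>$1$1) = \<phi>$1$1 * \<phi>$2$3" using h23 z by (simp add: mv3 r3_bracket_def algebra_simps)
  have c13: "\<phi>$3$2 + \<phi>$3$3 = \<phi>$1$1*\<phi>$2$2 + \<phi>$1$1*\<phi>$3$2" using h13 z by (simp add: mv3 r3_bracket_def algebra_simps)
  have d2: "\<phi>$1$1 * (\<phi>$2$2 * \<phi>$3$3 - \<phi>$2$3 * \<phi>$3$2) \<noteq> 0"
    using d z by (simp add: det3 algebra_simps)
  have one: "\<phi>$1$1 = 1"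
  proof (rule ccontr)
    assume n: "\<phi>$1$1 \<noteq> 1"
    have "\<phi>$2$3 = 0" using c22 n by simp
    moreover have "\<phi>$3$3 * (1 - \<phi>$1$1) = 0" using c23 \<open>\<phi>$2$3 = 0\<close> by simp
    then have "\<phi>$3$3 = 0" using n by simp
    ultimately show False using d2 by simp
  qed
  have "\<phi>$2$3 = 0" using c23 one by simp
  moreover have "\<phi>$2$2 = \<phi>$3$3" using c13 one by simp
  moreover have "\<phi>$2$2 \<noteq> 0" using d2 \<open>\<phi>$2$3 = 0\<close> one by auto
  ultimately show "\<phi>$1$2 = 0 \<and> \<phi>$1$3 = 0 \<and> \<phi>$2$3 = 0 \<and> \<phi>$1$1 = 1 \<and> \<phi>$2$2 = \<phi>$3$3 \<and> \<phi>$2$2 \<noteq> 0"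
    using z one by simp
next
  assume a: "\<phi>$1$2 = 0 \<and> \<phi>$1$3 = 0 \<and> \<phi>$2$3 = 0 \<and> \<phi>$1$1 = 1 \<and> \<phi>$2$2 = \<phi>$3$3 \<and> \<phi>$2$2 \<noteq> 0"
  have "det \<phi> \<noteq> 0" using a by (simp add: det3)
  then have "invertible \<phi>" using invertible_det_nz by auto
  moreover have "\<phi> *v r3_bracket x y = r3_bracket (\<phi> *v x) (\<phi> *v y)" for x y
    using a by (simp add: vec_eq_iff forall_3 mv3 r3_bracket_def algebra_simps)
  ultimately show "is_aut \<phi>" unfolding is_aut_def by auto
qed

definition LT :: "mat3 set" where
  "LT = {L. L$1$2 = 0 \<and> L$1$3 = 0 \<and> L$2$3 = 0 \<and> L$1$1 \<noteq> 0 \<and> L$2$2 \<noteq> 0 \<and> L$3$3 \<noteq> 0}"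

lemma RAut_char: "RAut = {L \<in> LT. L$2$2 = L$3$3}"
proof (intro set_eqI iffI)
  fix L assume "L \<in> RAut"
  then obtain c \<phi> where "L = c *\<^sub>R \<phi>" "c \<noteq> 0" "is_aut \<phi>" unfolding RAut_def by auto
  then show "L \<in> {L \<in> LT. L$2$2 = L$3$3}" by (auto simp: is_aut_char LT_def)
next
  fix L assume L: "L \<in> {L \<in> LT. L$2$2 = L$3$3}"
  let ?c = "L$1$1"
  have "is_aut ((1/?c) *\<^sub>R L)" using L by (auto simp: is_aut_char LT_def)
  moreover have "L = ?c *\<^sub>R ((1/?c) *\<^sub>R L)" using L by (auto simp: LT_def)
  ultimately show "L \<in> RAut" unfolding RAut_def using L
    by (intro CollectI exI[of _ ?c] exI[of _ "(1/?c) *\<^sub>R L"]) (auto simp: LT_def)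
qed

definition ltinv :: "mat3 \<Rightarrow> mat3" where
  "ltinv L = (let a = L$1$1; b = L$2$1; d = L$2$2; c = L$3$1; e = L$3$2; f = L$3$3 in
     vector [vector [1/a, 0, 0], vector [-b/(a*d), 1/d, 0], vector [(b*e - c*d)/(a*d*f), -e/(d*f), 1/f]])"

lemma ltinv_prop: assumes "L \<in> LT"
  shows "L ** ltinv L = mat 1" "ltinv L ** L = mat 1"
  using assms by (auto simp: LT_def ltinv_def Let_def m3_eq3 mm3 mat_def field_simps)

lemma LT_inv: assumes "L \<in> LT"
  shows "invertible L" "matrix_inv L = ltinv L" "matrix_inv L \<in> LT"
    "(matrix_inv L)$1$1 = 1 / L$1$1" "(matrix_inv L)$2$2 = 1 / L$2$2" "(matrix_inv L)$3$3 = 1 / L$3$3"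
proof -
  show "invertible L" using ltinv_prop[OF assms] invertible_def by blast
  show e: "matrix_inv L = ltinv L" using ltinv_prop[OF assms] by (rule inv_unique)
  show "matrix_inv L \<in> LT" "(matrix_inv L)$1$1 = 1 / L$1$1" "(matrix_inv L)$2$2 = 1 / L$2$2" "(matrix_inv L)$3$3 = 1 / L$3$3"
    using assms unfolding e by (auto simp: LT_def ltinv_def Let_def)
qed

lemma LT_mult: assumes "A \<in> LT" "B \<in> LT"
  shows "A ** B \<in> LT" "(A ** B)$1$1 = A$1$1 * B$1$1" "(A ** B)$2$2 = A$2$2 * B$2$2" "(A ** B)$3$3 = A$3$3 * B$3$3"
  using assms by (auto simp: LT_def mm3)

lemma RAut_LT: "RAut \<subseteq> LT" by (auto simp: RAut_char)

lemma conj_RAut: assumes k: "k \<in> LT" and r: "r \<in> RAut"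
  shows "k ** r ** matrix_inv k \<in> RAut"
proof -
  have r': "r \<in> LT" "r$2$2 = r$3$3" using r by (auto simp: RAut_char)
  note ki = LT_inv[OF k]
  have "k ** r \<in> LT" using LT_mult[OF k r'(1)] by simp
  then show ?thesis
    using LT_mult[OF \<open>k ** r \<in> LT\<close> ki(3)] LT_mult[OF k r'(1)] ki r' k
    by (auto simp: RAut_char LT_def)
qed

lemma orbit_LT: assumes k: "k \<in> LT" shows "act k ` orbit P = orbit (act k P)"
proof -
  note ki = LT_inv[OF k]
  have inv: "\<And>r. r \<in> RAut \<Longrightarrow> invertible r" using RAut_LT LT_inv by blast
  show ?thesis unfolding orbit_def
  proof (intro set_eqI iffI)
    fix x assume "x \<in> act k ` (\<lambda>g. act g P) ` RAut"
    then obtain r where r: "r \<in> RAut" "x = act k (act r P)" by auto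
    have "act (k ** r ** matrix_inv k) (act k P) = act (k ** r ** matrix_inv k ** k) P"
      using ki(1) inv[OF r(1)] inv_invertible[OF ki(1)] by (intro act_comp invertible_mult3) auto
    also have "k ** r ** matrix_inv k ** k = k ** r"
      using inv_props[OF ki(1)] by (metis matrix_mul_assoc matrix_mul_rid)
    also have "act (k ** r) P = act k (act r P)"
      using ki inv[OF r(1)] by (simp add: act_comp)
    finally have "act k (act r P) = act (k ** r ** matrix_inv k) (act k P)" by simp
    then show "x \<in> (\<lambda>g. act g (act k P)) ` RAut" using r conj_RAut[OF k r(1)] by auto
  next
    fix x assume "x \<in> (\<lambda>g. act g (act k P)) ` RAut"
    then obtain s where s: "s \<in> RAut" "x = act s (act k P)" by auto
    have s': "matrix_inv k ** s ** matrix_inv (matrix_inv k) \<in> RAut"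
      by (rule conj_RAut[OF ki(3) s(1)])
    have iv: "invertible (matrix_inv k ** s ** k)"
      using ki(1) inv[OF s(1)] inv_invertible[OF ki(1)] by (intro invertible_mult3) auto
    have "act k (act (matrix_inv k ** s ** k) P) = act (k ** (matrix_inv k ** s ** k)) P"
      using ki(1) iv by (intro act_comp) auto
    also have "k ** (matrix_inv k ** s ** k) = s ** k"
      using inv_props[OF ki(1)] by (metis matrix_mul_assoc matrix_mul_lid)
    also have "act (s ** k) P = act s (act k P)"
      using ki inv[OF s(1)] by (simp add: act_comp)
    finally have "act s (act k P) = act k (act (matrix_inv k ** s ** k) P)" by simp
    then show "x \<in> act k ` (\<lambda>g. act g P) ` RAut" using s s' inv_inv[OF ki(1)] by auto
  qed
qed



lemma quad3: "(vector [a,b,c]::real^3) \<bullet> ((P::mat3) *v vector [a,b,c]) =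
   a*(P$1$1*a + P$1$2*b + P$1$3*c) + b*(P$2$1*a + P$2$2*b + P$2$3*c) + c*(P$3$1*a + P$3$2*b + P$3$3*c)"
  by (simp add: inner_vec_def sum_3 mv3)

lemma vec3_nz: "(vector [a,b,c]::real^3) \<noteq> 0 \<longleftrightarrow> a \<noteq> 0 \<or> b \<noteq> 0 \<or> c \<noteq> 0"
  by (simp add: vec_eq_iff forall_3)

lemma chol: assumes P: "P \<in> Mg" shows "\<exists>U\<in>LT. transpose U ** U = P"
proof -
  have sym: "P$i$j = P$j$i" for i j
  proof -
    have "transpose P = P" using P unfolding Mg_def by auto
    then have "(transpose P)$j$i = P$j$i" by simp
    then show ?thesis by (simp add: transpose_def)
  qed
  have pos: "(vector [a,b,c]::real^3) \<bullet> (P *v vector [a,b,c]) > 0" if "a \<noteq> 0 \<or> b \<noteq> 0 \<or> c \<noteq> 0" for a b c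
  proof -
    have "(vector [a,b,c]::real^3) \<noteq> 0" using that by (simp add: vec3_nz)
    then show ?thesis using P unfolding Mg_def by simp
  qed
  define p11 where "p11 = P$1$1"
  define p12 where "p12 = P$1$2"
  define p13 where "p13 = P$1$3"
  define p22 where "p22 = P$2$2"
  define p23 where "p23 = P$2$3"
  define p33 where "p33 = P$3$3"
  have s: "P$2$1 = p12" "P$3$1 = p13" "P$3$2 = p23"
    by (simp_all add: p12_def p13_def p23_def sym[of 2 1] sym[of 3 1] sym[of 3 2])
  have q: "(vector [a,b,c]::real^3) \<bullet> ((P::mat3) *v vector [a,b,c]) =
     p11*a*a + p22*b*b + p33*c*c + 2*p12*a*b + 2*p13*a*c + 2*p23*b*c" for a b c
    unfolding quad3 s p11_def p12_def p13_def p22_def p23_def p33_def by (simp add: algebra_simps)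
  have p33: "p33 > 0" using pos[of 0 0 1] q[of 0 0 1] by simp
  define u33 where "u33 = sqrt p33"
  have u33: "u33 > 0" "u33 * u33 = p33" using p33 by (simp_all add: u33_def)
  define u32 where "u32 = p23 / u33"
  define u31 where "u31 = p13 / u33"
  have e23: "u32 * u33 = p23" and e13: "u31 * u33 = p13" using u33 by (simp_all add: u32_def u31_def)
  define sv where "sv = p22 - u32 * u32"
  have "sv = q" if "q = (vector [0,1,- p23/p33]::real^3) \<bullet> (P *v vector [0,1,- p23/p33])" for q
    using that u33 p33 unfolding q sv_def u32_def
    apply (simp add: field_simps power2_eq_square)
    apply (rule mult_left_cancel[of p33, THEN iffD1])
    by (auto simp: algebra_simps)
  then have sv: "sv > 0" using pos[of 0 1 "- p23/p33"] by simp
  define u22 where "u22 = sqrt sv"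
  have u22: "u22 > 0" "u22 * u22 = sv" using sv by (simp_all add: u22_def)
  define u21 where "u21 = (p12 - u31 * u32) / u22"
  have e12: "u21 * u22 + u31 * u32 = p12" using u22 by (simp add: u21_def)
  define tv where "tv = p11 - u21 * u21 - u31 * u31"
  define x2 where "x2 = - u21 / u22"
  define x3 where "x3 = - (u31 + u32 * x2) / u33"
  have y2: "u21 + u22 * x2 = 0" using u22 by (simp add: x2_def)
  have y3: "u31 + u32 * x2 + u33 * x3 = 0" using u33 by (simp add: x3_def)
  have pf: "p11 = tv + u21*u21 + u31*u31" "p22 = u22*u22 + u32*u32" "p33 = u33*u33"
     "p12 = u21*u22+u31*u32" "p13 = u31*u33" "p23 = u32*u33"
    using u22 u33 e12 e13 e23 by (simp_all add: tv_def sv_def)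
  have "(vector [1,x2,x3]::real^3) \<bullet> (P *v vector [1,x2,x3]) =
      tv + (u21 + u22 * x2)^2 + (u31 + u32 * x2 + u33 * x3)^2"
    unfolding q pf by algebra
  then have tv: "tv > 0" using pos[of 1 x2 x3] y2 y3 by simp
  define u11 where "u11 = sqrt tv"
  have u11: "u11 > 0" "u11 * u11 = tv" using tv by (simp_all add: u11_def)
  define U where "U = (vector [vector [u11, 0, 0], vector [u21, u22, 0], vector [u31, u32, u33]] :: mat3)"
  have "U \<in> LT" using u11 u22 u33 by (simp add: U_def LT_def)
  moreover have "transpose U ** U = P"
  proof -
    have Pe: "P$1$1 = u11*u11 + u21*u21 + u31*u31" "P$2$2 = u22*u22 + u32*u32" "P$3$3 = u33*u33"
      "P$1$2 = u21*u22+u31*u32" "P$1$3 = u31*u33" "P$2$3 = u32*u33"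
      "P$2$1 = u21*u22+u31*u32" "P$3$1 = u31*u33" "P$3$2 = u32*u33"
      using pf u11 s by (simp_all add: p11_def p12_def p13_def p22_def p23_def p33_def tv_def)
    show ?thesis unfolding m3_eq3 by (simp add: U_def mm3 transpose_def Pe algebra_simps)
  qed
  ultimately show ?thesis by blast
qed

lemma LT_trans: assumes "P \<in> Mg" shows "\<exists>k\<in>LT. act k (mat 1) = P"
proof -
  obtain U where U: "U \<in> LT" "transpose U ** U = P" using chol[OF assms] by blast
  note ui = LT_inv[OF U(1)]
  have "act (matrix_inv U) (mat 1) = P"
    unfolding act_def inv_inv[OF ui(1)] using U(2) by simp
  then show ?thesis using ui(3) by blast
qed



lemma congruent: assumes P: "P \<in> Mg" and Q: "Q \<in> Mg"
  shows "\<exists>f. isometry_Mg f \<and> f ` orbit P = orbit Q"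
proof -
  obtain kP where kP: "kP \<in> LT" "act kP (mat 1) = P" using LT_trans[OF P] by blast
  obtain kQ where kQ: "kQ \<in> LT" "act kQ (mat 1) = Q" using LT_trans[OF Q] by blast
  note iP = LT_inv[OF kP(1)] and iQ = LT_inv[OF kQ(1)]
  define g where "g = kQ ** matrix_inv kP"
  have gLT: "g \<in> LT" unfolding g_def using LT_mult(1)[OF kQ(1) iP(3)] .
  have gi: "invertible g" using LT_inv(1)[OF gLT] .
  have "act g P = act kQ (act (matrix_inv kP) (act kP (mat 1)))"
    unfolding g_def kP(2) using iQ(1) inv_invertible[OF iP(1)] by (simp add: act_comp)
  also have "\<dots> = Q" using act_inv[OF iP(1)] kQ(2) by simp
  finally have "act g P = Q" .
  then have "act g ` orbit P = orbit Q" using orbit_LT[OF gLT] by simp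
  then show ?thesis using isometry_act[OF gi] by blast
qed



definition E :: "3 \<Rightarrow> 3 \<Rightarrow> mat3" where "E i j = (\<chi> a b. if a = i \<and> b = j then 1 else 0)"
lemma E_nth[simp]: "E i j $ a $ b = (if a = i \<and> b = j then 1 else 0)" by (simp add: E_def)

lemma indep_pattern:
  assumes fin: "finite (S::mat3 set)"
    and pat: "\<And>s. s \<in> S \<Longrightarrow> \<exists>i j. s$i$j \<noteq> 0 \<and> (\<forall>t\<in>S. t \<noteq> s \<longrightarrow> t$i$j = 0)"
  shows "independent S"
proof
  assume "dependent S"
  then obtain u s where us: "s \<in> S" "u s \<noteq> 0" "(\<Sum>v\<in>S. u v *\<^sub>R v) = 0"
    using real_vector.dependent_finite[OF fin] by blast
  obtain i j where ij: "s$i$j \<noteq> 0" "\<forall>t\<in>S. t \<noteq> s \<longrightarrow> t$i$j = 0" using pat[OF us(1)] by blast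
  have "(\<Sum>v\<in>S. u v *\<^sub>R v)$i$j = (\<Sum>v\<in>S. u v * v$i$j)" by simp
  also have "\<dots> = u s * s$i$j"
    using ij(2) us(1) fin by (subst sum.remove[of _ s]) auto
  finally show False using us ij by simp
qed

definition SB :: "mat3 set" where
  "SB = {E 1 1, E 2 2, E 3 3, E 1 2 + E 2 1, E 1 3 + E 3 1, E 2 3 + E 3 2}"

lemma SB_card: "card SB = 6"
  by (simp add: SB_def vec_eq_iff forall_3)

lemma SB_indep: "independent SB"
proof (rule indep_pattern)
  show "finite SB" by (simp add: SB_def)
  fix s assume "s \<in> SB"
  then consider "s = E 1 1" | "s = E 2 2" | "s = E 3 3" | "s = E 1 2 + E 2 1" | "s = E 1 3 + E 3 1" | "s = E 2 3 + E 3 2"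
    unfolding SB_def by blast
  then show "\<exists>i j. s$i$j \<noteq> 0 \<and> (\<forall>t\<in>SB. t \<noteq> s \<longrightarrow> t$i$j = 0)"
  proof cases
    case 1 show ?thesis unfolding 1 by (intro exI[of _ 1] exI[of _ 1]) (auto simp: SB_def vec_eq_iff forall_3)
  next
    case 2 show ?thesis unfolding 2 by (intro exI[of _ 2] exI[of _ 2]) (auto simp: SB_def vec_eq_iff forall_3)
  next
    case 3 show ?thesis unfolding 3 by (intro exI[of _ 3] exI[of _ 3]) (auto simp: SB_def vec_eq_iff forall_3)
  next
    case 4 show ?thesis unfolding 4 by (intro exI[of _ 1] exI[of _ 2]) (auto simp: SB_def vec_eq_iff forall_3)
  next
    case 5 show ?thesis unfolding 5 by (intro exI[of _ 1] exI[of _ 3]) (auto simp: SB_def vec_eq_iff forall_3)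
  next
    case 6 show ?thesis unfolding 6 by (intro exI[of _ 2] exI[of _ 3]) (auto simp: SB_def vec_eq_iff forall_3)
  qed
qed

lemma dimMg: "dim_Mg = 6"
  unfolding dim_Mg_def
proof (rule dim_unique[OF _ _ SB_indep SB_card])
  show "SB \<subseteq> {A. transpose A = A}" by (auto simp: SB_def vec_eq_iff forall_3 transpose_def)
  show "{A::mat3. transpose A = A} \<subseteq> span SB"
  proof
    fix A :: mat3 assume "A \<in> {A. transpose A = A}"
    then have s: "A$i$j = A$j$i" for i j by (metis (mono_tags) mem_Collect_eq transpose_def vec_lambda_beta)
    have "A = A$1$1 *\<^sub>R E 1 1 + A$2$2 *\<^sub>R E 2 2 + A$3$3 *\<^sub>R E 3 3 + A$1$2 *\<^sub>R (E 1 2 + E 2 1)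
       + A$1$3 *\<^sub>R (E 1 3 + E 3 1) + A$2$3 *\<^sub>R (E 2 3 + E 3 2)"
      using s[of 2 1] s[of 3 1] s[of 3 2] by (simp add: vec_eq_iff forall_3)
    also have "\<dots> \<in> span SB"
      by (intro span_add span_scale span_base) (auto simp: SB_def)
    finally show "A \<in> span SB" .
  qed
qed



lemma mm_scale_r: "(A::mat3) ** (c *\<^sub>R B) = c *\<^sub>R (A ** B)"
  by (simp add: vec_eq_iff matrix_matrix_mult_def sum_distrib_left mult_ac)
lemma mm_scale_l: "(c *\<^sub>R A) ** (B::mat3) = c *\<^sub>R (A ** B)"
  by (simp add: vec_eq_iff matrix_matrix_mult_def sum_distrib_left mult_ac)

lemma mm_bb: "bounded_bilinear (\<lambda>(A::mat3) (B::mat3). A ** B)"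
proof -
  have "bilinear (\<lambda>(A::mat3) (B::mat3). A ** B)"
    unfolding bilinear_def
    by (auto intro!: linearI simp: matrix_add_ldistrib mat_radd mm_scale_r mm_scale_l)
  then show ?thesis by (simp add: bilinear_conv_bounded_bilinear)
qed

lemma transpose_add3: "transpose ((A::mat3) + B) = transpose A + transpose B"
  by (simp add: vec_eq_iff transpose_def)

lemma transpose_bl: "bounded_linear (transpose :: mat3 \<Rightarrow> mat3)"
proof -
  have "linear (transpose :: mat3 \<Rightarrow> mat3)"
    by (auto intro!: linearI simp: transpose_add3 transpose_scalar)
  then show ?thesis by (simp add: linear_conv_bounded_linear)
qed

lemma entry_bl: "bounded_linear (\<lambda>A::mat3. A$i$j)"
  using bounded_linear_compose[OF bounded_linear_vec_nth bounded_linear_vec_nth] by blast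

definition w :: "mat3 \<Rightarrow> mat3 \<Rightarrow> mat3" where
  "w P X = - (transpose X ** P + P ** X)"

lemma w_add: "w P (A + B) = w P A + w P B"
  by (simp add: w_def transpose_add3 matrix_add_ldistrib mat_radd algebra_simps)
lemma w_scale: "w P (c *\<^sub>R A) = c *\<^sub>R w P A"
  by (simp add: w_def transpose_scalar mm_scale_r mm_scale_l algebra_simps)

definition VBl :: "mat3 list" where
  "VBl = [E 2 1, E 3 1, E 3 2, E 1 1, E 2 2 + E 3 3]"

lemma const_deriv_zero:
  assumes "(f has_derivative f') (at (0::real))" "\<And>t. f t = c"
  shows "f' = (\<lambda>_. 0)"
proof -
  have "f = (\<lambda>_. c)" using assms(2) by auto
  then have "(f has_derivative (\<lambda>_. 0)) (at 0)" by simp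
  then show ?thesis using has_derivative_unique assms(1) by blast
qed

lemma tangent_upper: assumes "v \<in> orbit_tangent P"
  shows "v \<in> span (w P ` set VBl)"
proof -
  obtain \<gamma> where g: "\<And>t. \<gamma> t \<in> RAut" "\<gamma> 0 = mat 1" "\<gamma> differentiable (at 0)"
      "((\<lambda>t. act (\<gamma> t) P) has_vector_derivative v) (at 0)"
    using assms unfolding orbit_tangent_def by blast
  obtain D where D: "(\<gamma> has_derivative D) (at 0)" using g(3) unfolding differentiable_def by blast
  define X where "X = D 1"
  have Ds: "D s = s *\<^sub>R X" for s
  proof -
    have "linear D" using D by (rule has_derivative_linear)
    then have "D (s *\<^sub>R 1) = s *\<^sub>R D 1" by (rule linear_scale)
    then show ?thesis by (simp add: X_def)
  qed
  define F where "F t = act (\<gamma> t) P" for t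
  have F: "(F has_derivative (\<lambda>s. s *\<^sub>R v)) (at 0)"
    using g(4) unfolding F_def has_vector_derivative_def .
  have F0: "F 0 = P" by (simp add: F_def g(2) act_id)
  have inv: "invertible (\<gamma> t)" for t using g(1) RAut_LT LT_inv(1) by blast
  have const: "transpose (\<gamma> t) ** F t ** \<gamma> t = P" for t
  proof -
    have "transpose (\<gamma> t) ** transpose (matrix_inv (\<gamma> t)) = mat 1"
      by (metis inv inv_props(2) matrix_transpose_mul transpose_mat)
    then have "transpose (\<gamma> t) ** F t ** \<gamma> t
      = (transpose (\<gamma> t) ** transpose (matrix_inv (\<gamma> t))) ** P ** (matrix_inv (\<gamma> t) ** \<gamma> t)"
      by (simp add: F_def act_def matrix_mul_assoc)
    also have "\<dots> = P" using inv_props[OF inv] \<open>transpose (\<gamma> t) ** transpose (matrix_inv (\<gamma> t)) = mat 1\<close>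
      by simp
    finally show ?thesis .
  qed
  have Dt: "((\<lambda>t. transpose (\<gamma> t)) has_derivative (\<lambda>s. transpose (D s))) (at 0)"
    using bounded_linear.has_derivative[OF transpose_bl D] .
  have D1: "((\<lambda>t. transpose (\<gamma> t) ** F t) has_derivative
      (\<lambda>h. transpose (\<gamma> 0) ** (h *\<^sub>R v) + transpose (D h) ** F 0)) (at 0)"
    using bounded_bilinear.FDERIV[OF mm_bb Dt F] .
  have D2: "((\<lambda>t. transpose (\<gamma> t) ** F t ** \<gamma> t) has_derivative
      (\<lambda>h. (transpose (\<gamma> 0) ** F 0) ** D h + (transpose (\<gamma> 0) ** (h *\<^sub>R v) + transpose (D h) ** F 0) ** \<gamma> 0)) (at 0)"
    using bounded_bilinear.FDERIV[OF mm_bb D1 D] .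
  from const_deriv_zero[OF D2 const]
  have "(\<lambda>h. (transpose (\<gamma> 0) ** F 0) ** D h + (transpose (\<gamma> 0) ** (h *\<^sub>R v) + transpose (D h) ** F 0) ** \<gamma> 0) = (\<lambda>_. 0)" .
  from fun_cong[OF this, of 1]
  have "P ** X + (v + transpose X ** P) = 0" by (simp add: g(2) F0 Ds)
  then have vX: "v = w P X" unfolding w_def by (simp add: algebra_simps eq_neg_iff_add_eq_0)
  have ent: "((\<lambda>t. \<gamma> t $ i $ j) has_derivative (\<lambda>s. s * X $ i $ j)) (at 0)" for i j
    using bounded_linear.has_derivative[OF entry_bl D] by (simp add: Ds)
  have zero: "X $ i $ j = 0" if "\<And>t. \<gamma> t $ i $ j = 0" for i j
    using fun_cong[OF const_deriv_zero[OF ent that], of 1] by simp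
  have R: "\<gamma> t $ 1 $ 2 = 0 \<and> \<gamma> t $ 1 $ 3 = 0 \<and> \<gamma> t $ 2 $ 3 = 0 \<and> \<gamma> t $ 2 $ 2 = \<gamma> t $ 3 $ 3" for t
    using g(1)[of t] by (auto simp: RAut_char LT_def)
  have x12: "X$1$2 = 0" and x13: "X$1$3 = 0" and x23: "X$2$3 = 0" using zero R by auto
  have "((\<lambda>t. \<gamma> t $ 2 $ 2 - \<gamma> t $ 3 $ 3) has_derivative (\<lambda>s. s * X $ 2 $ 2 - s * X $ 3 $ 3)) (at 0)"
    using has_derivative_diff[OF ent ent] .
  moreover have "\<And>t. \<gamma> t $ 2 $ 2 - \<gamma> t $ 3 $ 3 = 0" using R by simp
  ultimately have "(\<lambda>s. s * X $ 2 $ 2 - s * X $ 3 $ 3) = (\<lambda>_. 0)" by (rule const_deriv_zero)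
  from fun_cong[OF this, of 1] have x22: "X$2$2 = X$3$3" by simp
  have Xe: "X = X$2$1 *\<^sub>R E 2 1 + X$3$1 *\<^sub>R E 3 1 + X$3$2 *\<^sub>R E 3 2 + X$1$1 *\<^sub>R E 1 1 + X$2$2 *\<^sub>R (E 2 2 + E 3 3)"
    using x12 x13 x23 x22 by (simp add: vec_eq_iff forall_3)
  have "w P X = X$2$1 *\<^sub>R w P (E 2 1) + X$3$1 *\<^sub>R w P (E 3 1) + X$3$2 *\<^sub>R w P (E 3 2) + X$1$1 *\<^sub>R w P (E 1 1)
      + X$2$2 *\<^sub>R w P (E 2 2 + E 3 3)"
    by (subst Xe) (simp add: w_add w_scale)
  also have "\<dots> \<in> span (w P ` set VBl)"
    by (intro span_add span_scale span_base) (auto simp: VBl_def)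
  finally show ?thesis using vX by simp
qed

lemma orbit_dim_le: "orbit_dim P \<le> 5"
proof -
  have "orbit_dim P \<le> card (w P ` set VBl)"
    unfolding orbit_dim_def by (rule dim_le_card) (use tangent_upper in auto)
  also have "\<dots> \<le> card (set VBl)" by (rule card_image_le) simp
  also have "\<dots> \<le> length VBl" by (rule card_length)
  finally show ?thesis by (simp add: VBl_def)
qed



lemma curve_tangent:
  assumes R: "\<And>t. mat 1 + a t *\<^sub>R X \<in> RAut"
    and p1: "\<And>t. (mat 1 + a t *\<^sub>R X) ** (mat 1 + b t *\<^sub>R X) = mat 1"
    and p2: "\<And>t. (mat 1 + b t *\<^sub>R X) ** (mat 1 + a t *\<^sub>R X) = mat 1"
    and a0: "a 0 = 0" and b0: "b 0 = 0"
    and da: "(a has_real_derivative 1) (at 0)" and db: "(b has_real_derivative -1) (at 0)"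
  shows "w (mat 1) X \<in> orbit_tangent (mat 1)"
proof -
  define \<gamma> where "\<gamma> t = mat 1 + a t *\<^sub>R X" for t
  have dg: "(\<gamma> has_vector_derivative X) (at 0)"
    unfolding \<gamma>_def
    by (rule has_vector_derivative_eq_rhs, (rule derivative_intros da)+) simp
  have inv: "matrix_inv (\<gamma> t) = mat 1 + b t *\<^sub>R X" for t
    unfolding \<gamma>_def using p1 p2 by (rule inv_unique)
  have act: "act (\<gamma> t) (mat 1) = mat 1 + b t *\<^sub>R (transpose X + X) + (b t * b t) *\<^sub>R (transpose X ** X)" for t
    unfolding act_def inv
    by (simp add: transpose_add3 transpose_scalar matrix_add_ldistrib mat_radd mm_scale_l mm_scale_r algebra_simps)
  have "((\<lambda>t. act (\<gamma> t) (mat 1)) has_vector_derivative w (mat 1) X) (at 0)"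
    unfolding act
    by (rule has_vector_derivative_eq_rhs, (rule derivative_intros db)+) (simp add: b0 w_def)
  moreover have "\<gamma> 0 = mat 1" by (simp add: \<gamma>_def a0)
  moreover have "\<forall>t. \<gamma> t \<in> RAut" using R by (simp add: \<gamma>_def)
  ultimately show ?thesis unfolding orbit_tangent_def using differentiableI_vector[OF dg] by blast
qed

lemma nil_tangent: assumes "X \<in> {E 2 1, E 3 1, E 3 2}" shows "w (mat 1) X \<in> orbit_tangent (mat 1)"
proof (rule curve_tangent[where a = "\<lambda>t. t" and b = "\<lambda>t. - t"])
  fix t :: real
  show "mat 1 + t *\<^sub>R X \<in> RAut" using assms by (auto simp: RAut_char LT_def mat_def)
  show "(mat 1 + t *\<^sub>R X) ** (mat 1 + - t *\<^sub>R X) = mat 1" using assms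
    by (auto simp: m3_eq3 mm3 mat_def)
  show "(mat 1 + - t *\<^sub>R X) ** (mat 1 + t *\<^sub>R X) = mat 1" using assms
    by (auto simp: m3_eq3 mm3 mat_def)
qed (auto intro!: derivative_eq_intros)

lemma idem_tangent: assumes "X \<in> {E 1 1, E 2 2 + E 3 3}" shows "w (mat 1) X \<in> orbit_tangent (mat 1)"
proof (rule curve_tangent[where a = "\<lambda>t. exp t - 1" and b = "\<lambda>t. exp (- t) - 1"])
  fix t :: real
  have e: "exp t * exp (- t) = 1" "exp (-t) * exp t = 1" by (simp_all add: exp_minus_inverse mult.commute)
  show "mat 1 + (exp t - 1) *\<^sub>R X \<in> RAut" using assms by (auto simp: RAut_char LT_def mat_def)
  show "(mat 1 + (exp t - 1) *\<^sub>R X) ** (mat 1 + (exp (- t) - 1) *\<^sub>R X) = mat 1" using assms e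
    by (auto simp: m3_eq3 mm3 mat_def)
  show "(mat 1 + (exp (- t) - 1) *\<^sub>R X) ** (mat 1 + (exp t - 1) *\<^sub>R X) = mat 1" using assms e
    by (auto simp: m3_eq3 mm3 mat_def)
qed (auto intro!: derivative_eq_intros)

definition TB :: "mat3 set" where "TB = w (mat 1) ` set VBl"

lemma TB_sub: "TB \<subseteq> orbit_tangent (mat 1)"
  unfolding TB_def VBl_def using nil_tangent idem_tangent by auto

lemma TB_card: "card TB = 5"
  by (simp add: TB_def VBl_def w_def vec_eq_iff forall_3 transpose_def)

lemma TB_indep: "independent TB"
proof (rule indep_pattern)
  show "finite TB" by (simp add: TB_def)
  fix s assume "s \<in> TB"
  then consider "s = w (mat 1) (E 2 1)" | "s = w (mat 1) (E 3 1)" | "s = w (mat 1) (E 3 2)"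
     | "s = w (mat 1) (E 1 1)" | "s = w (mat 1) (E 2 2 + E 3 3)"
    unfolding TB_def VBl_def by auto
  then show "\<exists>i j. s$i$j \<noteq> 0 \<and> (\<forall>t\<in>TB. t \<noteq> s \<longrightarrow> t$i$j = 0)"
  proof cases
    case 1 show ?thesis unfolding 1 by (intro exI[of _ 2] exI[of _ 1]) (auto simp: TB_def VBl_def w_def vec_eq_iff forall_3 transpose_def)
  next
    case 2 show ?thesis unfolding 2 by (intro exI[of _ 3] exI[of _ 1]) (auto simp: TB_def VBl_def w_def vec_eq_iff forall_3 transpose_def)
  next
    case 3 show ?thesis unfolding 3 by (intro exI[of _ 3] exI[of _ 2]) (auto simp: TB_def VBl_def w_def vec_eq_iff forall_3 transpose_def)
  next
    case 4 show ?thesis unfolding 4 by (intro exI[of _ 1] exI[of _ 1]) (auto simp: TB_def VBl_def w_def vec_eq_iff forall_3 transpose_def)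
  next
    case 5 show ?thesis unfolding 5 by (intro exI[of _ 2] exI[of _ 2]) (auto simp: TB_def VBl_def w_def vec_eq_iff forall_3 transpose_def)
  qed
qed

lemma orbit_dim_I: "orbit_dim (mat 1) \<ge> 5"
  using independent_card_le_dim[OF TB_sub TB_indep] TB_card unfolding orbit_dim_def by simp

lemma I_Mg: "mat 1 \<in> Mg"
  by (simp add: Mg_def)


theorem lemma5p1:
  shows "cohomogeneity_one \<and>
         (\<forall>P\<in>Mg. \<forall>Q\<in>Mg. \<exists>f. isometry_Mg f \<and> f ` orbit P = orbit Q)"
proof
  have fin: "finite (orbit_dim ` Mg)"
    by (rule finite_subset[of _ "{..5}"]) (auto simp: orbit_dim_le)
  have I5: "orbit_dim (mat 1) = 5" using orbit_dim_I orbit_dim_le[of "mat 1"] by simp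
  have "Max (orbit_dim ` Mg) = 5"
    by (rule Max_eqI[OF fin]) (use orbit_dim_le I5 I_Mg in \<open>auto intro: image_eqI[of 5 _ "mat 1"]\<close>)
  then show "cohomogeneity_one" unfolding cohomogeneity_one_def by (simp add: dimMg)
  show "\<forall>P\<in>Mg. \<forall>Q\<in>Mg. \<exists>f. isometry_Mg f \<and> f ` orbit P = orbit Q"
    using congruent by blast
qed

end
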